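(* Let $K,N\ge 1$, let $c_1^M,\dots,c_K^M>0$ with $C^M=\sum_k c_k^M$, let $0\le r_1<r_2<\dots<r_K$, let $p=(p_1,\dots,p_N)$ with $p_i\ge 0$ and $p_{\max}=\max_ip_i$, and let $\epsilon$ be a random vector with a known distribution on $[0,1]^N$. With $\mathcal{F}_c$, $k_c$ and $\mathrm{cost}(\epsilon,c)$ as defined in the context, the function $f(c)=\mathbb{E}_\epsilon[\mathrm{cost}(\epsilon,c)]$ is convex on $\mathcal{F}_c$, and the output $\bar c_J$ of the projected stochastic subgradient descent algorithm described in the context satisfies $\mathbb{E}[f(\bar c_J)]\to\min_{c\in\mathcal{F}_c}f(c)$ as $J\to\infty$.
   Context: Feasible region: $\mathcal{F}_c=\{c\in\mathbb{R}^N: c\ge 0,\ \sum_{i=1}^N c_i\le C^M\}$. For $\epsilon\in[0,1]^N$ and $c\in\mathcal{F}_c$, the critical type is $k_c=\min\{q\in\{1,\dots,K\}:\sum_i\epsilon_ic_i\le\sum_{k=1}^q c_k^M\}$, and $\mathrm{cost}(\epsilon,c)=\sum_{k<k_c}(r_k-r_{k_c})c_k^M+\sum_{i=1}^N c_i(r_{k_c}\epsilon_i-p_i)$ (the optimal net cost of a cryptomining facility with $K$ machine types of capacities $c_k^M$ and per-unit mining rewards $r_k$, committing capacities $c_i$ to $N$ ancillary service programs with prices $p_i$ and deployment ratios $\epsilon_i$). Algorithm: let $D=C^M$ if $N=1$ and $D=\sqrt2\,C^M$ if $N\ge 2$; fix $M\ge1$ and $J\ge 1$, step sizes $\alpha_j=\frac{D}{\sqrt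 N\max(r_K,p_{\max})\sqrt j}$. Start from some $c^{(1)}\in\mathcal{F}_c$. For $j=1,\dots,J$: draw $M$ independent samples $\epsilon^{(1)},\dots,\epsilon^{(M)}$ of $\epsilon$, compute $g_j=\frac1M\sum_{m=1}^M\big(r_{k_c^{(m)}}\epsilon^{(m)}-p\big)$ where $k_c^{(m)}$ is the critical type for $(\epsilon^{(m)},c^{(j)})$, set $c^{(j+1)}$ to be the Euclidean projection of $c^{(j)}-\alpha_jg_j$ onto $\mathcal{F}_c$. Output $\bar c_J=\frac1J\sum_{j=1}^Jc^{(j)}$. *)

theory Defs
  imports "HOL-Probability.Probability"
begin

text \<open>Ancillary-service index set = the finite type 'n (N = CARD('n));
machine types are indexed by 1..K (functions on nat).\<close>

definition feasible_set :: "real \<Rightarrow> (real^'n) set" where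
  "feasible_set CM = {c. (\<forall>i. 0 \<le> c $ i) \<and> (\<Sum>i\<in>UNIV. c $ i) \<le> CM}"

definition crit_type :: "nat \<Rightarrow> (nat \<Rightarrow> real) \<Rightarrow> real^'n \<Rightarrow> real^'n \<Rightarrow> nat" where
  "crit_type K cM e c =
     (LEAST q. q \<in> {1..K} \<and> (\<Sum>i\<in>UNIV. e $ i * c $ i) \<le> (\<Sum>k=1..q. cM k))"

definition cost :: "nat \<Rightarrow> (nat \<Rightarrow> real) \<Rightarrow> (nat \<Rightarrow> real) \<Rightarrow> real^'n \<Rightarrow> real^'n \<Rightarrow> real^'n \<Rightarrow> real" where
  "cost K cM r p e c =
     (let kc = crit_type K cM e c in
        (\<Sum>k\<in>{1..<kc}. (r k - r kc) * cM k) + (\<Sum>i\<in>UNIV. c $ i * (r kc * e $ i - p $ i)))"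

definition exp_cost :: "nat \<Rightarrow> (nat \<Rightarrow> real) \<Rightarrow> (nat \<Rightarrow> real) \<Rightarrow> real^'n \<Rightarrow> (real^'n) measure \<Rightarrow> real^'n \<Rightarrow> real" where
  "exp_cost K cM r p Deps c = (\<integral>e. cost K cM r p e c \<partial>Deps)"

definition pmax :: "real^'n \<Rightarrow> real" where
  "pmax p = Max (range (\<lambda>i. p $ i))"

definition step_size :: "nat \<Rightarrow> (nat \<Rightarrow> real) \<Rightarrow> real^'n \<Rightarrow> real \<Rightarrow> nat \<Rightarrow> real" where
  "step_size K r p CM j =
     (let N = CARD('n); D = (if N = 1 then CM else sqrt 2 * CM) in
        D / (sqrt (real N) * max (r K) (pmax p) * sqrt (real j)))"

definition stoch_grad :: "nat \<Rightarrow> (nat \<Rightarrow> real) \<Rightarrow> (nat \<Rightarrow> real) \<Rightarrow> real^'n \<Rightarrow> nat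
     \<Rightarrow> (nat \<times> nat \<Rightarrow> real^'n) \<Rightarrow> nat \<Rightarrow> real^'n \<Rightarrow> real^'n" where
  "stoch_grad K cM r p Ms w j c =
     (1 / real Ms) *\<^sub>R (\<Sum>m=1..Ms. (r (crit_type K cM (w (j, m)) c) *\<^sub>R w (j, m) - p))"

text \<open>sgd_iter ... n = c^(n+1): the (n+1)-th iterate of projected SGD started at c1.\<close>
primrec sgd_iter :: "nat \<Rightarrow> (nat \<Rightarrow> real) \<Rightarrow> (nat \<Rightarrow> real) \<Rightarrow> real^'n \<Rightarrow> nat
     \<Rightarrow> real^'n \<Rightarrow> (nat \<times> nat \<Rightarrow> real^'n) \<Rightarrow> nat \<Rightarrow> real^'n" where
  "sgd_iter K cM r p Ms c1 w 0 = c1"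
| "sgd_iter K cM r p Ms c1 w (Suc n) =
     (let CM = (\<Sum>k=1..K. cM k); c = sgd_iter K cM r p Ms c1 w n in
       closest_point (feasible_set CM)
         (c - step_size K r p CM (Suc n) *\<^sub>R stoch_grad K cM r p Ms w (Suc n) c))"

definition sgd_output :: "nat \<Rightarrow> (nat \<Rightarrow> real) \<Rightarrow> (nat \<Rightarrow> real) \<Rightarrow> real^'n \<Rightarrow> nat
     \<Rightarrow> real^'n \<Rightarrow> (nat \<times> nat \<Rightarrow> real^'n) \<Rightarrow> nat \<Rightarrow> real^'n" where
  "sgd_output K cM r p Ms c1 w J =
     (1 / real J) *\<^sub>R (\<Sum>j=1..J. sgd_iter K cM r p Ms c1 w (j - 1))"

end

theory Submission
  imports Defs
begin

definition SS :: "(nat \<Rightarrow> real) \<Rightarrow> nat \<Rightarrow> real" where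
  "SS cM q = (\<Sum>k=1..q. cM k)"

definition psi :: "(nat \<Rightarrow> real) \<Rightarrow> (nat \<Rightarrow> real) \<Rightarrow> nat \<Rightarrow> real \<Rightarrow> real" where
  "psi cM r k t = (\<Sum>j\<in>{1..<k}. (r j - r k) * cM j) + r k * t"

lemma psi_alt: "psi cM r k t = (\<Sum>j\<in>{1..<k}. r j * cM j) - r k * (\<Sum>j\<in>{1..<k}. cM j) + r k * t"
  unfolding psi_def by (simp add: algebra_simps sum_subtractf sum_distrib_left)

lemma psi_step: "psi cM r (Suc k) t - psi cM r k t = (r (Suc k) - r k) * (t - SS cM k)"
proof (cases "k = 0")
  case True then show ?thesis by (simp add: psi_def SS_def algebra_simps)
next
  case False
  then have e1: "{1..<Suc k} = insert k {1..<k}" by auto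
  have e2: "{1..k} = insert k {1..<k}" using False by auto
  show ?thesis unfolding psi_alt SS_def e1 e2 by (simp add: algebra_simps)
qed

locale sgdctx =
  fixes K :: nat and cM r :: "nat \<Rightarrow> real" and p :: "real^'n"
    and Deps :: "(real^'n) measure" and Ms :: nat
  assumes K: "K \<ge> 1"
    and cM_pos: "\<forall>k\<in>{1..K}. cM k > 0"
    and r_nonneg: "r 1 \<ge> 0"
    and r_incr: "\<forall>k\<in>{1..<K}. r k < r (Suc k)"
    and p_nonneg: "\<forall>i. p $ i \<ge> 0"
    and prob: "prob_space Deps"
    and borel: "sets Deps = sets borel"
    and supp: "AE e in Deps. \<forall>i. e $ i \<in> {0..1}"
    and Ms: "Ms \<ge> 1"
begin

lemma SS_mono: "a \<le> b \<Longrightarrow> b \<le> K \<Longrightarrow> SS cM a \<le> SS cM b"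
  unfolding SS_def
proof (intro sum_mono2)
  fix x assume "b \<le> K" "x \<in> {1..b} - {1..a}"
  then show "0 \<le> cM x" using cM_pos by (auto intro: less_imp_le)
qed auto


lemma psi_up:
  assumes "1 \<le> k" "k \<le> l" "l \<le> K" "SS cM (l - 1) \<le> t"
  shows "psi cM r k t \<le> psi cM r l t"
  using assms(2)
proof (induction k rule: inc_induct)
  case base then show ?case by simp
next
  case (step n)
  have "SS cM n \<le> SS cM (l - 1)" using step assms by (intro SS_mono) auto
  moreover have "n \<in> {1..<K}" using step assms by auto
  then have "r n \<le> r (Suc n)" using r_incr less_imp_le by blast
  ultimately have "0 \<le> (r (Suc n) - r n) * (t - SS cM n)" using assms by simp
  then show ?case using psi_step[of cM r n t] step by linarith
qed

lemma psi_down: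
  assumes "1 \<le> l" "l \<le> k" "k \<le> K" "t \<le> SS cM l"
  shows "psi cM r k t \<le> psi cM r l t"
  using assms(2,3)
proof (induction k rule: dec_induct)
  case base then show ?case by simp
next
  case (step n)
  have "SS cM l \<le> SS cM n" using step assms by (intro SS_mono) auto
  moreover have "n \<in> {1..<K}" using step assms by auto
  then have "r n \<le> r (Suc n)" using r_incr less_imp_le by blast
  ultimately have "(r (Suc n) - r n) * (t - SS cM n) \<le> 0" using assms
    by (simp add: mult_nonneg_nonpos)
  then show ?case using psi_step[of cM r n t] step by linarith
qed

definition kt :: "real \<Rightarrow> nat" where
  "kt t = (LEAST q. q \<in> {1..K} \<and> t \<le> SS cM q)"

lemma crit_kt: "crit_type K cM e c = kt (\<Sum>i\<in>UNIV. e $ i * c $ i)"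
  unfolding crit_type_def kt_def SS_def ..

lemma kt_props:
  assumes "t \<le> SS cM K"
  shows "kt t \<in> {1..K}" "t \<le> SS cM (kt t)" "kt t = 1 \<or> SS cM (kt t - 1) < t"
proof -
  have ex: "K \<in> {1..K} \<and> t \<le> SS cM K" using K assms by auto
  show "kt t \<in> {1..K}" "t \<le> SS cM (kt t)" unfolding kt_def using LeastI[where k=K and P="\<lambda>q. q \<in> {1..K} \<and> t \<le> SS cM q", OF ex] by auto
  show "kt t = 1 \<or> SS cM (kt t - 1) < t"
  proof (rule ccontr)
    assume a: "\<not> (kt t = 1 \<or> SS cM (kt t - 1) < t)"
    have "kt t \<in> {1..K}" unfolding kt_def using LeastI[where k=K and P="\<lambda>q. q \<in> {1..K} \<and> t \<le> SS cM q", OF ex] by auto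
    then have "kt t - 1 \<in> {1..K} \<and> t \<le> SS cM (kt t - 1)" using a by auto
    then have "kt t \<le> kt t - 1" unfolding kt_def by (rule Least_le)
    then show False using a \<open>kt t \<in> {1..K}\<close> by auto
  qed
qed

lemma psi_max:
  assumes "t \<le> SS cM K" "k \<in> {1..K}"
  shows "psi cM r k t \<le> psi cM r (kt t) t"
proof (cases "k < kt t")
  case True
  show ?thesis
  proof (rule psi_up)
    show "SS cM (kt t - 1) \<le> t"
      using kt_props[OF assms(1)] True assms by auto
  qed (use True assms kt_props[OF assms(1)] in auto)
next
  case False
  then show ?thesis using psi_down[of "kt t" k t] kt_props[OF assms(1)] assms by auto
qed

lemma cost_psi: "cost K cM r p e c = psi cM r (crit_type K cM e c) (\<Sum>i\<in>UNIV. e $ i * c $ i)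
    - (\<Sum>i\<in>UNIV. c $ i * p $ i)"
  unfolding cost_def psi_def Let_def
  by (simp add: algebra_simps sum_subtractf sum_distrib_left)

lemma subgrad:
  assumes "(\<Sum>i\<in>UNIV. e $ i * y $ i) \<le> SS cM K" "(\<Sum>i\<in>UNIV. e $ i * c $ i) \<le> SS cM K"
  shows "cost K cM r p e c + (r (crit_type K cM e c) *\<^sub>R e - p) \<bullet> (y - c) \<le> cost K cM r p e y"
proof -
  define ty where "ty = (\<Sum>i\<in>UNIV. e $ i * y $ i)"
  define tc where "tc = (\<Sum>i\<in>UNIV. e $ i * c $ i)"
  define k where "k = kt tc"
  have k: "k \<in> {1..K}" using kt_props assms unfolding k_def tc_def by auto
  have "psi cM r k ty \<le> psi cM r (kt ty) ty" using psi_max[OF _ k] assms unfolding ty_def by auto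
  moreover have "psi cM r k ty = psi cM r k tc + r k * (ty - tc)" unfolding psi_def by (simp add: algebra_simps)
  moreover have "(r k *\<^sub>R e - p) \<bullet> (y - c) = r k * (ty - tc) - ((\<Sum>i\<in>UNIV. y $ i * p $ i) - (\<Sum>i\<in>UNIV. c $ i * p $ i))"
    unfolding ty_def tc_def inner_vec_def
    by (simp add: algebra_simps sum_subtractf sum_distrib_left sum.distrib)
  ultimately show ?thesis unfolding cost_psi crit_kt k_def ty_def tc_def by linarith
qed


lemma dot_inner: "(\<Sum>i\<in>UNIV. e $ i * c $ i) = e \<bullet> (c::real^'n)"
  by (simp add: inner_vec_def)

lemma crit_kt': "crit_type K cM e (c::real^'n) = kt (e \<bullet> c)"
  by (simp only: crit_kt dot_inner)

lemma cost_alt: "cost K cM r p e (c::real^'n) = (\<Sum>k\<in>{1..<kt (e \<bullet> c)}. (r k - r (kt (e \<bullet> c))) * cM k)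
    + c \<bullet> (r (kt (e \<bullet> c)) *\<^sub>R e - p)"
  unfolding cost_def Let_def crit_kt' by (simp add: inner_vec_def)

lemma kt_meas[measurable]:
  fixes X Y :: "'a \<Rightarrow> real^'n"
  assumes [measurable]: "X \<in> borel_measurable M" "Y \<in> borel_measurable M"
  shows "(\<lambda>x. kt (X x \<bullet> Y x)) \<in> measurable M (count_space UNIV)"
proof -
  have [measurable]: "(\<lambda>x. X x \<bullet> Y x) \<in> borel_measurable M"
    by (rule borel_measurable_inner) (use assms in auto)
  show ?thesis unfolding kt_def by measurable
qed

lemma cost_meas:
  fixes X Y :: "'a \<Rightarrow> real^'n"
  assumes [measurable]: "X \<in> borel_measurable M" "Y \<in> borel_measurable M"
  shows "(\<lambda>x. cost K cM r p (X x) (Y x)) \<in> borel_measurable M"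
  unfolding cost_alt
  by (rule measurable_compose_countable[where g="\<lambda>x. kt (X x \<bullet> Y x)"
      and f="\<lambda>k x. (\<Sum>k'\<in>{1..<k}. (r k' - r k) * cM k') + Y x \<bullet> (r k *\<^sub>R X x - p)"]) measurable

lemma grad_meas:
  fixes X Y :: "'a \<Rightarrow> real^'n"
  assumes [measurable]: "X \<in> borel_measurable M" "Y \<in> borel_measurable M"
  shows "(\<lambda>x. r (crit_type K cM (X x) (Y x)) *\<^sub>R X x - p) \<in> borel_measurable M"
  unfolding crit_kt'
  by (rule measurable_compose_countable[where g="\<lambda>x. kt (X x \<bullet> Y x)"
      and f="\<lambda>k x. r k *\<^sub>R X x - p"]) measurable


abbreviation CM where "CM \<equiv> (\<Sum>k=1..K. cM k)"
abbreviation FF :: "(real^'n) set" where "FF \<equiv> feasible_set CM"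

lemma SS_K: "SS cM K = CM" by (simp add: SS_def)

lemma CM_pos: "CM > 0"
proof -
  have "cM 1 \<le> CM" using cM_pos K by (intro member_le_sum) (auto intro: less_imp_le)
  then show ?thesis using cM_pos K by force
qed

definition box01 :: "real^'n \<Rightarrow> bool" where "box01 e \<longleftrightarrow> (\<forall>i. e $ i \<in> {0..1})"

lemma supp': "AE e in Deps. box01 e" using supp unfolding box01_def .

lemma F_convex: "convex FF"
proof (rule convexI)
  fix x y :: "real^'n" and u v :: real
  assume "x \<in> FF" "y \<in> FF" and uv: "0 \<le> u" "0 \<le> v" "u + v = 1"
  then have x: "\<forall>i. 0 \<le> x $ i" "(\<Sum>i\<in>UNIV. x $ i) \<le> CM" and y: "\<forall>i. 0 \<le> y $ i" "(\<Sum>i\<in>UNIV. y $ i) \<le> CM"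
    unfolding feasible_set_def by auto
  have "(\<Sum>i\<in>UNIV. (u *\<^sub>R x + v *\<^sub>R y) $ i) = u * (\<Sum>i\<in>UNIV. x $ i) + v * (\<Sum>i\<in>UNIV. y $ i)"
    by (simp add: sum.distrib sum_distrib_left)
  also have "\<dots> \<le> u * CM + v * CM" using x y uv by (intro add_mono mult_left_mono) auto
  also have "\<dots> = CM" using uv(3) by (metis distrib_right mult_1)
  finally have "(\<Sum>i\<in>UNIV. (u *\<^sub>R x + v *\<^sub>R y) $ i) \<le> CM" .
  then show "u *\<^sub>R x + v *\<^sub>R y \<in> FF" unfolding feasible_set_def using x y uv by simp
qed

lemma F_closed: "closed FF"
  unfolding feasible_set_def
  by (intro closed_Collect_conj closed_Collect_all closed_Collect_le continuous_intros)

lemma F_ne: "FF \<noteq> {}"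
proof -
  have "0 \<in> FF" unfolding feasible_set_def using CM_pos by simp
  then show ?thesis by auto
qed

lemma F_comp: "c \<in> FF \<Longrightarrow> 0 \<le> c $ i \<and> c $ i \<le> CM"
  unfolding feasible_set_def
proof safe
  assume a: "\<forall>i. 0 \<le> c $ i" "(\<Sum>i\<in>UNIV. c $ i) \<le> CM"
  have "c $ i \<le> (\<Sum>i\<in>UNIV. c $ i)" using a by (intro member_le_sum) auto
  then show "c $ i \<le> CM" using a by simp
qed auto

lemma F_norm: "c \<in> FF \<Longrightarrow> norm c \<le> CM"
proof -
  assume c: "c \<in> FF"
  have "norm c \<le> (\<Sum>i\<in>UNIV. \<bar>c $ i\<bar>)" by (rule norm_le_l1_cart)
  also have "\<dots> = (\<Sum>i\<in>UNIV. c $ i)" using F_comp[OF c] by simp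
  also have "\<dots> \<le> CM" using c unfolding feasible_set_def by simp
  finally show ?thesis .
qed

lemma dot_le: "c \<in> FF \<Longrightarrow> box01 e \<Longrightarrow> e \<bullet> c \<le> CM"
proof -
  assume c: "c \<in> FF" and e: "box01 e"
  have "e \<bullet> c = (\<Sum>i\<in>UNIV. e $ i * c $ i)" by (simp add: inner_vec_def)
  also have "\<dots> \<le> (\<Sum>i\<in>UNIV. c $ i)"
    using F_comp[OF c] e unfolding box01_def by (intro sum_mono) (simp add: mult_left_le_one_le)
  also have "\<dots> \<le> CM" using c unfolding feasible_set_def by simp
  finally show ?thesis .
qed

lemma subgrad':
  assumes "box01 e" "y \<in> FF" "c \<in> FF"
  shows "cost K cM r p e c + (r (crit_type K cM e c) *\<^sub>R e - p) \<bullet> (y - c) \<le> cost K cM r p e y"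
  by (rule subgrad) (use dot_le[OF assms(2,1)] dot_le[OF assms(3,1)] in \<open>simp_all add: dot_inner SS_K\<close>)

definition RR where "RR = (\<Sum>l=1..K. \<bar>r l\<bar>)"
definition PP where "PP = (\<Sum>i\<in>UNIV. \<bar>p $ i\<bar>)"
definition BB where "BB = 3 * RR * CM + CM * PP"

lemma r_le_RR: "k \<in> {1..K} \<Longrightarrow> \<bar>r k\<bar> \<le> RR"
  unfolding RR_def by (rule member_le_sum[where f="\<lambda>l. \<bar>r l\<bar>"]) auto

lemma RR_nonneg: "0 \<le> RR" unfolding RR_def by (auto intro: sum_nonneg)

lemma cost_bound:
  assumes e: "box01 e" and c: "c \<in> FF"
  shows "\<bar>cost K cM r p e c\<bar> \<le> BB"
proof -
  define k where "k = crit_type K cM e c"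
  define t where "t = e \<bullet> c"
  have tle: "t \<le> SS cM K" using dot_le[OF c e] SS_K t_def by simp
  have k: "k \<in> {1..K}" using kt_props(1)[OF tle] unfolding k_def t_def crit_kt' .
  have t0: "0 \<le> t" unfolding t_def inner_vec_def using e F_comp[OF c] unfolding box01_def
    by (auto intro!: sum_nonneg)
  have "\<bar>\<Sum>j\<in>{1..<k}. (r j - r k) * cM j\<bar> \<le> (\<Sum>j\<in>{1..<k}. \<bar>(r j - r k) * cM j\<bar>)"
    by (rule sum_abs)
  also have "\<dots> \<le> (\<Sum>j\<in>{1..<k}. (2 * RR) * cM j)"
  proof (rule sum_mono)
    fix j assume j: "j \<in> {1..<k}"
    then have jK: "j \<in> {1..K}" using k by auto
    have "\<bar>r j - r k\<bar> \<le> 2 * RR" using r_le_RR[OF jK] r_le_RR[OF k] by linarith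
    moreover have "0 < cM j" using cM_pos jK by auto
    ultimately show "\<bar>(r j - r k) * cM j\<bar> \<le> 2 * RR * cM j" by (simp add: abs_mult)
  qed
  also have "\<dots> = 2 * RR * (\<Sum>j\<in>{1..<k}. cM j)" by (simp add: sum_distrib_left)
  also have "\<dots> \<le> 2 * RR * CM"
  proof -
    have "(\<Sum>j\<in>{1..<k}. cM j) \<le> CM" using k cM_pos
      by (intro sum_mono2) (auto intro: less_imp_le)
    then show ?thesis using RR_nonneg by (intro mult_left_mono) auto
  qed
  finally have A: "\<bar>\<Sum>j\<in>{1..<k}. (r j - r k) * cM j\<bar> \<le> 2 * RR * CM" .
  have B: "\<bar>r k * t\<bar> \<le> RR * CM"
    using r_le_RR[OF k] t0 dot_le[OF c e] RR_nonneg unfolding t_def abs_mult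
    by (intro mult_mono) auto
  have "\<bar>\<Sum>i\<in>UNIV. c $ i * p $ i\<bar> \<le> (\<Sum>i\<in>UNIV. \<bar>c $ i * p $ i\<bar>)" by (rule sum_abs)
  also have "\<dots> \<le> (\<Sum>i\<in>UNIV. CM * \<bar>p $ i\<bar>)"
    using F_comp[OF c] by (intro sum_mono) (simp add: abs_mult mult_right_mono)
  finally have C: "\<bar>\<Sum>i\<in>UNIV. c $ i * p $ i\<bar> \<le> CM * PP" by (simp add: PP_def sum_distrib_left)
  have "cost K cM r p e c = (\<Sum>j\<in>{1..<k}. (r j - r k) * cM j) + r k * t - (\<Sum>i\<in>UNIV. c $ i * p $ i)"
    unfolding cost_psi psi_def k_def t_def dot_inner ..
  then show ?thesis using A B C unfolding BB_def by linarith
qed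

lemma Deps_prob: "prob_space Deps" by (rule prob)

lemma id_meas[measurable]: "(\<lambda>x. x) \<in> borel_measurable Deps"
  using measurable_ident_sets[OF borel] .

lemma cost_integrable:
  assumes c: "c \<in> FF"
  shows "integrable Deps (\<lambda>e. cost K cM r p e c)"
proof -
  interpret prob_space Deps by (rule prob)
  show ?thesis
  proof (rule integrable_const_bound[where B=BB])
    show "AE x in Deps. norm (cost K cM r p x c) \<le> BB"
      using supp' by eventually_elim (use cost_bound c in auto)
    show "(\<lambda>e. cost K cM r p e c) \<in> borel_measurable Deps"
      by (rule cost_meas[where X="\<lambda>x. x" and Y="\<lambda>_. c"]) auto
  qed
qed

abbreviation ff where "ff \<equiv> exp_cost K cM r p Deps"

lemma f_bound: "c \<in> FF \<Longrightarrow> \<bar>ff c\<bar> \<le> BB"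
proof -
  assume c: "c \<in> FF"
  interpret prob_space Deps by (rule prob)
  have "\<bar>ff c\<bar> \<le> (\<integral>e. \<bar>cost K cM r p e c\<bar> \<partial>Deps)"
    unfolding exp_cost_def by (rule integral_abs_bound)
  also have "\<dots> \<le> (\<integral>e. BB \<partial>Deps)"
    using supp' cost_integrable[OF c] cost_bound[OF _ c]
    by (intro integral_mono_AE) (auto elim: eventually_mono)
  finally show ?thesis by (simp add: prob_space)
qed

lemma f_convex: "convex_on FF ff"
proof (rule convex_onI)
  show "convex FF" by (rule F_convex)
  fix t :: real and x y :: "real^'n" assume t: "0 < t" "t < 1" and x: "x \<in> FF" and y: "y \<in> FF"
  define z where "z = (1 - t) *\<^sub>R x + t *\<^sub>R y"
  have z: "z \<in> FF" using F_convex x y t unfolding z_def convex_alt by auto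
  have "AE e in Deps. cost K cM r p e z \<le> (1 - t) * cost K cM r p e x + t * cost K cM r p e y"
    using supp'
  proof eventually_elim
    case (elim e)
    define g where "g = r (crit_type K cM e z) *\<^sub>R e - p"
    have 1: "cost K cM r p e z + g \<bullet> (x - z) \<le> cost K cM r p e x" unfolding g_def by (rule subgrad'[OF elim x z])
    have 2: "cost K cM r p e z + g \<bullet> (y - z) \<le> cost K cM r p e y" unfolding g_def by (rule subgrad'[OF elim y z])
    have 3: "(1 - t) * (g \<bullet> (x - z)) + t * (g \<bullet> (y - z)) = 0"
      unfolding z_def by (simp add: inner_diff_right inner_add_right algebra_simps)
    have "(1 - t) * (cost K cM r p e z + g \<bullet> (x - z)) + t * (cost K cM r p e z + g \<bullet> (y - z))
        \<le> (1 - t) * cost K cM r p e x + t * cost K cM r p e y"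
      using 1 2 t by (intro add_mono mult_left_mono) auto
    then show ?case using 3 by (simp add: algebra_simps)
  qed
  then have "ff z \<le> (\<integral>e. (1 - t) * cost K cM r p e x + t * cost K cM r p e y \<partial>Deps)"
    unfolding exp_cost_def using cost_integrable[OF x] cost_integrable[OF y] cost_integrable[OF z]
    by (intro integral_mono_AE) auto
  also have "\<dots> = (1 - t) * ff x + t * ff y"
    unfolding exp_cost_def using cost_integrable[OF x] cost_integrable[OF y] by simp
  finally show "ff ((1 - t) *\<^sub>R x + t *\<^sub>R y) \<le> (1 - t) * ff x + t * ff y" unfolding z_def .
qed


lemma r_mono: "1 \<le> a \<Longrightarrow> a \<le> b \<Longrightarrow> b \<le> K \<Longrightarrow> r a \<le> r b"
proof -
  assume a: "1 \<le> a" and ab: "a \<le> b" and bK: "b \<le> K"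
  have "b \<le> K \<longrightarrow> r a \<le> r b" using ab
  proof (induction b rule: dec_induct)
    case base then show ?case by simp
  next
    case (step n)
    show ?case
    proof
      assume "Suc n \<le> K"
      then have "n \<in> {1..<K}" using step a by auto
      then have "r n < r (Suc n)" using r_incr by blast
      then show "r a \<le> r (Suc n)" using step \<open>Suc n \<le> K\<close> by auto
    qed
  qed
  then show ?thesis using bK by simp
qed

definition mx where "mx = max (r K) (pmax p)"
definition NN where "NN = real CARD('n)"
definition GG where "GG = NN * mx"

lemma r_range: "k \<in> {1..K} \<Longrightarrow> 0 \<le> r k \<and> r k \<le> mx"
  using r_mono[of 1 k] r_mono[of k K] r_nonneg unfolding mx_def by auto

lemma p_range: "0 \<le> p $ i \<and> p $ i \<le> mx"
proof -
  have "p $ i \<le> pmax p" unfolding pmax_def by (rule Max_ge) auto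
  then show ?thesis using p_nonneg unfolding mx_def by auto
qed

lemma mx_nonneg: "0 \<le> mx" using p_range by (meson order.trans)

lemma NN_pos: "NN > 0" unfolding NN_def by simp

lemma sample_norm:
  assumes "box01 e" "k \<in> {1..K}"
  shows "norm (r k *\<^sub>R e - p) \<le> GG"
proof -
  have "norm (r k *\<^sub>R e - p) \<le> (\<Sum>i\<in>UNIV. \<bar>(r k *\<^sub>R e - p) $ i\<bar>)" by (rule norm_le_l1_cart)
  also have "\<dots> \<le> (\<Sum>i\<in>(UNIV::'n set). mx)"
  proof (rule sum_mono)
    fix i
    have e: "0 \<le> e $ i" "e $ i \<le> 1" using assms(1) unfolding box01_def by auto
    have rk: "0 \<le> r k" "r k \<le> mx" using r_range[OF assms(2)] by auto
    have "r k * e $ i \<le> r k" using e rk by (simp add: mult_right_le_one_le)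
    moreover have "0 \<le> r k * e $ i" using e rk by simp
    ultimately show "\<bar>(r k *\<^sub>R e - p) $ i\<bar> \<le> mx" using p_range[of i] rk by auto
  qed
  also have "\<dots> = GG" unfolding GG_def NN_def by simp
  finally show ?thesis .
qed

lemma grad_norm:
  assumes "\<forall>m\<in>{1..Ms}. box01 (w (j, m))" "c \<in> FF"
  shows "norm (stoch_grad K cM r p Ms w j c) \<le> GG"
proof -
  have "norm (\<Sum>m=1..Ms. r (crit_type K cM (w (j, m)) c) *\<^sub>R w (j, m) - p)
      \<le> (\<Sum>m=1..Ms. norm (r (crit_type K cM (w (j, m)) c) *\<^sub>R w (j, m) - p))"
    by (rule norm_sum)
  also have "\<dots> \<le> (\<Sum>m=1..Ms. GG)"
  proof (rule sum_mono)
    fix m assume m: "m \<in> {1..Ms}"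
    have tle: "w (j, m) \<bullet> c \<le> SS cM K" using dot_le[OF assms(2)] assms(1) m SS_K by auto
    show "norm (r (crit_type K cM (w (j, m)) c) *\<^sub>R w (j, m) - p) \<le> GG"
      using sample_norm assms(1) m kt_props(1)[OF tle] unfolding crit_kt' by auto
  qed
  also have "\<dots> = real Ms * GG" by simp
  finally have "norm (\<Sum>m=1..Ms. r (crit_type K cM (w (j, m)) c) *\<^sub>R w (j, m) - p) \<le> real Ms * GG" .
  then show ?thesis unfolding stoch_grad_def using Ms by (simp add: field_simps)
qed

lemma step_ineq:
  fixes x c g :: "real^'n"
  assumes x: "x \<in> FF" and c: "c \<in> FF" and g: "norm g \<le> G" and a: "0 \<le> \<alpha>" "0 \<le> \<beta>"
    and ab: "2 * \<alpha> * \<beta> = 1 \<or> (\<alpha> = 0 \<and> \<beta> = 0 \<and> g = 0)"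
  shows "g \<bullet> (x - c) \<le> \<beta> * ((norm (x - c))\<^sup>2 - (norm (closest_point FF (x - \<alpha> *\<^sub>R g) - c))\<^sup>2) + \<alpha> / 2 * G\<^sup>2"
proof (cases "2 * \<alpha> * \<beta> = 1")
  case False
  then have "\<alpha> = 0" "\<beta> = 0" "g = 0" using ab by auto
  then show ?thesis by simp
next
  case True
  have "dist (closest_point FF (x - \<alpha> *\<^sub>R g)) (closest_point FF c) \<le> dist (x - \<alpha> *\<^sub>R g) c"
    by (rule closest_point_lipschitz[OF F_convex F_closed F_ne])
  then have "norm (closest_point FF (x - \<alpha> *\<^sub>R g) - c) \<le> norm ((x - c) - \<alpha> *\<^sub>R g)"
    using closest_point_self[OF c] by (simp add: dist_norm algebra_simps)
  then have "(norm (closest_point FF (x - \<alpha> *\<^sub>R g) - c))\<^sup>2 \<le> (norm ((x - c) - \<alpha> *\<^sub>R g))\<^sup>2"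
    by (simp add: power_mono)
  also have "(norm ((x - c) - \<alpha> *\<^sub>R g))\<^sup>2 = (norm (x - c))\<^sup>2 - 2 * \<alpha> * (g \<bullet> (x - c)) + \<alpha>\<^sup>2 * (norm g)\<^sup>2"
    unfolding power2_norm_eq_inner
    by (simp add: inner_diff_left inner_diff_right inner_commute power2_eq_square algebra_simps)
  finally have A: "(norm (closest_point FF (x - \<alpha> *\<^sub>R g) - c))\<^sup>2 \<le>
      (norm (x - c))\<^sup>2 - 2 * \<alpha> * (g \<bullet> (x - c)) + \<alpha>\<^sup>2 * (norm g)\<^sup>2" .
  have "(norm g)\<^sup>2 \<le> G\<^sup>2" using g by (simp add: power_mono)
  then have B: "\<beta> * (\<alpha>\<^sup>2 * (norm g)\<^sup>2) \<le> \<alpha> / 2 * G\<^sup>2"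
  proof -
    assume h: "(norm g)\<^sup>2 \<le> G\<^sup>2"
    have "\<beta> * (\<alpha>\<^sup>2 * (norm g)\<^sup>2) = \<alpha> / 2 * (2 * \<alpha> * \<beta>) * (norm g)\<^sup>2" by (simp add: power2_eq_square)
    also have "\<dots> = \<alpha> / 2 * (norm g)\<^sup>2" using True by simp
    also have "\<dots> \<le> \<alpha> / 2 * G\<^sup>2" using h a by (intro mult_left_mono) auto
    finally show ?thesis .
  qed
  have "\<beta> * (norm (closest_point FF (x - \<alpha> *\<^sub>R g) - c))\<^sup>2 \<le>
      \<beta> * ((norm (x - c))\<^sup>2 - 2 * \<alpha> * (g \<bullet> (x - c)) + \<alpha>\<^sup>2 * (norm g)\<^sup>2)"
    using A a by (intro mult_left_mono) auto
  also have "\<dots> = \<beta> * (norm (x - c))\<^sup>2 - (2 * \<alpha> * \<beta>) * (g \<bullet> (x - c)) + \<beta> * (\<alpha>\<^sup>2 * (norm g)\<^sup>2)"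
    by (simp add: algebra_simps)
  also have "\<dots> = \<beta> * (norm (x - c))\<^sup>2 - (g \<bullet> (x - c)) + \<beta> * (\<alpha>\<^sup>2 * (norm g)\<^sup>2)"
    using True by simp
  finally show ?thesis using B by (simp add: algebra_simps)
qed

end

lemma telescope:
  fixes xs d \<beta> \<alpha> :: "nat \<Rightarrow> real"
  assumes d: "\<And>j. 0 \<le> d j \<and> d j \<le> Dsq" and b: "\<And>j. 0 \<le> \<beta> j" "\<And>j. \<beta> j \<le> \<beta> (Suc j)"
    and st: "\<And>j. j \<in> {1..J} \<Longrightarrow> xs j \<le> \<beta> j * (d (j - 1) - d j) + \<alpha> j * G2 / 2"
  shows "(\<Sum>j=1..J. xs j) \<le> \<beta> J * (Dsq - d J) + G2 / 2 * (\<Sum>j=1..J. \<alpha> j)"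
  using st
proof (induction J)
  case 0 then show ?case using d b by simp
next
  case (Suc J)
  have IH: "(\<Sum>j=1..J. xs j) \<le> \<beta> J * (Dsq - d J) + G2 / 2 * (\<Sum>j=1..J. \<alpha> j)"
    using Suc by auto
  have S: "xs (Suc J) \<le> \<beta> (Suc J) * (d J - d (Suc J)) + \<alpha> (Suc J) * G2 / 2" using Suc.prems[of "Suc J"] by simp
  have M: "\<beta> J * (Dsq - d J) \<le> \<beta> (Suc J) * (Dsq - d J)" using d[of J] b(2)[of J] by (intro mult_right_mono) auto
  show ?case using IH S M by (simp add: algebra_simps)
qed

lemma sum_inv_sqrt: "(\<Sum>j=1..J. 1 / sqrt (real j)) \<le> 2 * sqrt (real J)"
proof (induction J)
  case 0 then show ?case by simp
next
  case (Suc J)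
  define a where "a = sqrt (real J)"
  define b where "b = sqrt (real (Suc J))"
  have a0: "0 \<le> a" and b0: "0 < b" unfolding a_def b_def by auto
  have a2: "a\<^sup>2 = real J" and b2: "b\<^sup>2 = real J + 1" unfolding a_def b_def by auto
  have "0 \<le> (b - a)\<^sup>2" by simp
  then have "2 * a * b \<le> a\<^sup>2 + b\<^sup>2" by (simp add: power2_eq_square algebra_simps)
  then have key: "1 \<le> 2 * b * (b - a)" using a2 b2 by (simp add: power2_eq_square algebra_simps)
  have "1 / b \<le> 2 * (b - a)" using key b0 by (simp add: field_simps)
  then show ?case using Suc unfolding a_def b_def by simp
qed


context sgdctx
begin

abbreviation it where "it c1 w n \<equiv> sgd_iter K cM r p Ms c1 w n"

lemma it_Suc: "it c1 w (Suc n) = closest_point FF (it c1 w n - step_size K r p CM (Suc n) *\<^sub>R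
    stoch_grad K cM r p Ms w (Suc n) (it c1 w n))"
  by (simp add: Let_def)

lemma it_F: "c1 \<in> FF \<Longrightarrow> it c1 w n \<in> FF"
proof (cases n)
  case (Suc m)
  show ?thesis unfolding Suc it_Suc by (rule closest_point_in_set[OF F_closed F_ne])
qed simp

lemma it_local: "(\<And>k m. k \<in> {1..n} \<Longrightarrow> m \<in> {1..Ms} \<Longrightarrow> w (k, m) = w' (k, m)) \<Longrightarrow> it c1 w n = it c1 w' n"
proof (induction n)
  case 0 then show ?case by simp
next
  case (Suc n)
  have IH: "it c1 w n = it c1 w' n" using Suc by auto
  have "stoch_grad K cM r p Ms w (Suc n) (it c1 w n) = stoch_grad K cM r p Ms w' (Suc n) (it c1 w' n)"
    unfolding stoch_grad_def IH using Suc.prems by (intro arg_cong2[where f="(*\<^sub>R)"] sum.cong) auto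
  then show ?case unfolding it_Suc IH by simp
qed

definition DD where "DD = (if CARD('n) = 1 then CM else sqrt 2 * CM)"
definition aa where "aa = DD / (sqrt NN * mx)"

lemma DD_pos: "DD > 0" unfolding DD_def using CM_pos by auto

lemma step_aa: "step_size K r p CM j = aa / sqrt (real j)"
  unfolding step_size_def Let_def aa_def DD_def NN_def mx_def by simp

lemma aa_nonneg: "0 \<le> aa" unfolding aa_def using DD_pos mx_nonneg NN_pos by simp

lemma aa_zero: "aa = 0 \<Longrightarrow> GG = 0"
  unfolding aa_def GG_def using DD_pos NN_pos by auto

definition C0 where "C0 = (2 * CM)\<^sup>2 / (2 * aa) + GG\<^sup>2 * aa"

lemma det_bound:
  assumes c1: "c1 \<in> FF" and c: "c \<in> FF"
    and box: "\<And>j m. j \<in> {1..J} \<Longrightarrow> m \<in> {1..Ms} \<Longrightarrow> box01 (w (j, m))"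
  shows "(\<Sum>j=1..J. stoch_grad K cM r p Ms w j (it c1 w (j - 1)) \<bullet> (it c1 w (j - 1) - c)) \<le> C0 * sqrt (real J)"
proof -
  define d where "d j = (norm (it c1 w j - c))\<^sup>2" for j
  define \<beta> where "\<beta> j = sqrt (real j) / (2 * aa)" for j
  define \<alpha> where "\<alpha> j = aa / sqrt (real j)" for j
  have dB: "0 \<le> d j \<and> d j \<le> (2 * CM)\<^sup>2" for j
  proof -
    have "norm (it c1 w j - c) \<le> norm (it c1 w j) + norm c" by (rule norm_triangle_ineq4)
    also have "\<dots> \<le> 2 * CM" using F_norm[OF it_F[OF c1, of w j]] F_norm[OF c] by linarith
    finally have "(norm (it c1 w j - c))\<^sup>2 \<le> (2 * CM)\<^sup>2" by (intro power_mono) auto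
    then show ?thesis unfolding d_def by simp
  qed
  have b0: "0 \<le> \<beta> j" for j unfolding \<beta>_def using aa_nonneg by simp
  have bm: "\<beta> j \<le> \<beta> (Suc j)" for j unfolding \<beta>_def using aa_nonneg
    by (intro divide_right_mono) auto
  have st: "stoch_grad K cM r p Ms w j (it c1 w (j - 1)) \<bullet> (it c1 w (j - 1) - c)
      \<le> \<beta> j * (d (j - 1) - d j) + \<alpha> j * GG\<^sup>2 / 2" if j: "j \<in> {1..J}" for j
  proof -
    define g where "g = stoch_grad K cM r p Ms w j (it c1 w (j - 1))"
    have jS: "j = Suc (j - 1)" using j by auto
    have itj: "it c1 w j = closest_point FF (it c1 w (j - 1) - \<alpha> j *\<^sub>R g)"
      using it_Suc[of c1 w "j - 1"] jS unfolding g_def step_aa \<alpha>_def by simp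
    have gn: "norm g \<le> GG" unfolding g_def using box j by (intro grad_norm it_F c1) auto
    have ab: "2 * \<alpha> j * \<beta> j = 1 \<or> (\<alpha> j = 0 \<and> \<beta> j = 0 \<and> g = 0)"
    proof (cases "aa = 0")
      case True
      then have "GG = 0" by (rule aa_zero)
      then show ?thesis using gn True unfolding \<alpha>_def \<beta>_def by simp
    next
      case False
      have "sqrt (real j) > 0" using j by auto
      then show ?thesis using False unfolding \<alpha>_def \<beta>_def by (simp add: field_simps)
    qed
    have "g \<bullet> (it c1 w (j - 1) - c) \<le> \<beta> j * ((norm (it c1 w (j - 1) - c))\<^sup>2
        - (norm (closest_point FF (it c1 w (j - 1) - \<alpha> j *\<^sub>R g) - c))\<^sup>2) + \<alpha> j / 2 * GG\<^sup>2"
      by (rule step_ineq[OF it_F[OF c1] c gn]) (use aa_nonneg ab in \<open>auto simp: \<alpha>_def \<beta>_def\<close>)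
    then show ?thesis unfolding g_def[symmetric] d_def itj[symmetric] by simp
  qed
  have "(\<Sum>j=1..J. stoch_grad K cM r p Ms w j (it c1 w (j - 1)) \<bullet> (it c1 w (j - 1) - c))
      \<le> \<beta> J * ((2 * CM)\<^sup>2 - d J) + GG\<^sup>2 / 2 * (\<Sum>j=1..J. \<alpha> j)"
    by (rule telescope[where d=d and \<beta>=\<beta> and \<alpha>=\<alpha>]) (use dB b0 bm st in auto)
  also have "\<dots> \<le> \<beta> J * (2 * CM)\<^sup>2 + GG\<^sup>2 / 2 * (aa * (2 * sqrt (real J)))"
  proof (rule add_mono)
    show "\<beta> J * ((2 * CM)\<^sup>2 - d J) \<le> \<beta> J * (2 * CM)\<^sup>2" using dB[of J] b0[of J] by (simp add: mult_left_mono)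
    have "(\<Sum>j=1..J. \<alpha> j) = aa * (\<Sum>j=1..J. 1 / sqrt (real j))" unfolding \<alpha>_def by (simp add: sum_distrib_left)
    then have "(\<Sum>j=1..J. \<alpha> j) \<le> aa * (2 * sqrt (real J))"
      using sum_inv_sqrt[of J] aa_nonneg by (simp add: mult_left_mono)
    then show "GG\<^sup>2 / 2 * (\<Sum>j=1..J. \<alpha> j) \<le> GG\<^sup>2 / 2 * (aa * (2 * sqrt (real J)))"
      by (intro mult_left_mono) auto
  qed
  also have "\<dots> = C0 * sqrt (real J)" unfolding C0_def \<beta>_def by (simp add: field_simps)
  finally show ?thesis .
qed


end

context sgdctx begin
abbreviation Pw where "Pw I \<equiv> PiM I (\<lambda>_. Deps)"

lemma prob_Pw: "prob_space (Pw I)"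
  by (rule prob_space_PiM) (use prob in auto)

lemma comp_meas: "i \<in> I \<Longrightarrow> (\<lambda>w. w i) \<in> borel_measurable (Pw I)"
proof -
  assume i: "i \<in> I"
  show ?thesis using measurable_compose[OF measurable_component_singleton[OF i, of "\<lambda>_. Deps"] id_meas] by simp
qed

lemma closest_meas:
  assumes "X \<in> borel_measurable M"
  shows "(\<lambda>x. closest_point FF (X x)) \<in> borel_measurable M"
  by (rule borel_measurable_continuous_on[OF continuous_on_closest_point[OF F_convex F_closed F_ne] assms])

lemma it_meas: "{1..n} \<times> {1..Ms} \<subseteq> I \<Longrightarrow> (\<lambda>w. it c1 w n) \<in> borel_measurable (Pw I)"
proof (induction n)
  case 0 then show ?case by simp
next
  case (Suc n)
  have IH: "(\<lambda>w. it c1 w n) \<in> borel_measurable (Pw I)"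
    by (rule Suc.IH) (use Suc.prems in auto)
  have gm: "(\<lambda>w. r (crit_type K cM (w (Suc n, m)) (it c1 w n)) *\<^sub>R w (Suc n, m) - p) \<in> borel_measurable (Pw I)"
    if "m \<in> {1..Ms}" for m
    by (rule grad_meas[OF comp_meas IH]) (use Suc.prems that in auto)
  have "(\<lambda>w. \<Sum>m=1..Ms. r (crit_type K cM (w (Suc n, m)) (it c1 w n)) *\<^sub>R w (Suc n, m) - p) \<in> borel_measurable (Pw I)"
    by (rule borel_measurable_sum) (rule gm)
  then have "(\<lambda>w. stoch_grad K cM r p Ms w (Suc n) (it c1 w n)) \<in> borel_measurable (Pw I)"
    unfolding stoch_grad_def by (rule borel_measurable_scaleR[OF borel_measurable_const])
  then have "(\<lambda>w. it c1 w n - step_size K r p CM (Suc n) *\<^sub>R stoch_grad K cM r p Ms w (Suc n) (it c1 w n)) \<in> borel_measurable (Pw I)"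
    by (rule borel_measurable_diff[OF IH borel_measurable_scaleR[OF borel_measurable_const]])
  then show ?case unfolding it_Suc by (rule closest_meas)
qed

lemma ff_meas: "ff \<in> borel_measurable borel"
proof -
  interpret prob_space Deps by (rule prob)
  have sn: "snd \<in> borel_measurable (borel \<Otimes>\<^sub>M Deps)"
    using measurable_compose[OF measurable_snd id_meas] by simp
  have fs: "fst \<in> borel_measurable (borel \<Otimes>\<^sub>M Deps)" by simp
  have "(\<lambda>x. cost K cM r p (snd x) (fst x)) \<in> borel_measurable (borel \<Otimes>\<^sub>M Deps)"
    by (rule cost_meas[OF sn fs])
  then have "case_prod (\<lambda>c e. cost K cM r p e c) \<in> borel_measurable (borel \<Otimes>\<^sub>M Deps)"
    by (simp add: split_beta')
  then have "(\<lambda>c. \<integral>e. cost K cM r p e c \<partial>Deps) \<in> borel_measurable borel"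
    by (rule borel_measurable_lebesgue_integral)
  then show ?thesis unfolding exp_cost_def .
qed

lemma AE_box: "finite I \<Longrightarrow> AE w in Pw I. \<forall>i\<in>I. box01 (w i)"
proof -
  assume fin: "finite I"
  have "AE w in Pw I. box01 (w i)" if "i \<in> I" for i
    by (rule AE_PiM_component[of I "\<lambda>_. Deps" i box01]) (use prob supp' that in simp_all)
  then show ?thesis by (rule AE_finite_allI[OF fin])
qed

lemma indep:
  assumes I: "finite I" "i \<in> I" and Y: "Y \<in> borel_measurable (Pw I)"
    and Yloc: "\<And>w y. Y (w(i := y)) = Y w" and YF: "\<And>w. Y w \<in> FF"
  shows "integrable (Pw I) (\<lambda>w. cost K cM r p (w i) (Y w))"
    "integrable (Pw I) (\<lambda>w. ff (Y w))"
    "(\<integral>w. cost K cM r p (w i) (Y w) \<partial>Pw I) = (\<integral>w. ff (Y w) \<partial>Pw I)"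
proof -
  interpret P: prob_space "Pw I" by (rule prob_Pw)
  interpret D: prob_space Deps by (rule prob)
  interpret product_sigma_finite "\<lambda>_. Deps" by unfold_locales
  show i1: "integrable (Pw I) (\<lambda>w. cost K cM r p (w i) (Y w))"
  proof (rule P.integrable_const_bound[where B=BB])
    show "AE x in Pw I. norm (cost K cM r p (x i) (Y x)) \<le> BB"
      using AE_box[OF I(1)] by eventually_elim (use cost_bound YF I in auto)
    show "(\<lambda>w. cost K cM r p (w i) (Y w)) \<in> borel_measurable (Pw I)"
      by (rule cost_meas[OF comp_meas[OF I(2)] Y])
  qed
  have ffY: "(\<lambda>w. ff (Y w)) \<in> borel_measurable (Pw I)"
    using measurable_compose[OF Y ff_meas] by simp
  show i2: "integrable (Pw I) (\<lambda>w. ff (Y w))"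
    by (rule P.integrable_const_bound[where B=BB]) (use f_bound YF ffY in auto)
  have pD: "measure Deps (space Deps) = 1" using prob by (simp add: prob_space.prob_space)
  define I' where "I' = I - {i}"
  have II: "I = insert i I'" "finite I'" "i \<notin> I'" unfolding I'_def using I by auto
  have "(\<integral>w. cost K cM r p (w i) (Y w) \<partial>Pw I) = (\<integral>x. (\<integral>y. cost K cM r p ((x(i:=y)) i) (Y (x(i:=y))) \<partial>Deps) \<partial>Pw I')"
    using product_integral_insert[OF II(2,3), of "\<lambda>w. cost K cM r p (w i) (Y w)"] i1 II(1) by simp
  also have "\<dots> = (\<integral>x. ff (Y x) \<partial>Pw I')" unfolding Yloc exp_cost_def by simp
  also have "\<dots> = (\<integral>w. ff (Y w) \<partial>Pw I)"
  proof -
    have inner: "(\<integral>y. ff (Y (x(i:=y))) \<partial>Deps) = ff (Y x)" for x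
      unfolding Yloc using D.prob_space by simp
    show ?thesis
      using product_integral_insert[OF II(2,3), of "\<lambda>w. ff (Y w)"] i2 II(1) inner by simp
  qed
  finally show "(\<integral>w. cost K cM r p (w i) (Y w) \<partial>Pw I) = (\<integral>w. ff (Y w) \<partial>Pw I)" .
qed


lemma main_ineq:
  assumes J: "J \<ge> 1" and c1: "c1 \<in> FF" and c: "c \<in> FF"
  shows "integrable (Pw ({1..J} \<times> {1..Ms})) (\<lambda>w. ff (sgd_output K cM r p Ms c1 w J))"
    "(\<integral>w. ff (sgd_output K cM r p Ms c1 w J) \<partial>Pw ({1..J} \<times> {1..Ms})) \<le> ff c + C0 / sqrt (real J)"
    "(\<integral>w. ff (sgd_output K cM r p Ms c1 w J) \<partial>Pw ({1..J} \<times> {1..Ms})) \<ge> (INF c\<in>FF. ff c)"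
proof -
  define I where "I = {1..J} \<times> {1..Ms}"
  have finI: "finite I" unfolding I_def by simp
  interpret P: prob_space "Pw I" by (rule prob_Pw)
  define X where "X j w = it c1 w (j - 1)" for j w
  have XF: "X j w \<in> FF" for j w unfolding X_def by (rule it_F[OF c1])
  have Xm: "(\<lambda>w. X j w) \<in> borel_measurable (Pw I)" if "j \<in> {1..J}" for j
    unfolding X_def by (rule it_meas) (use that in \<open>auto simp: I_def\<close>)
  have Xloc: "X j (w((j, m) := y)) = X j w" for j m w y
    unfolding X_def by (rule it_local) auto
  have iI: "(j, m) \<in> I" if "j \<in> {1..J}" "m \<in> {1..Ms}" for j m using that unfolding I_def by auto
  note ind1 = indep[OF finI iI Xm Xloc XF]
  have cm: "(\<lambda>w. c) \<in> borel_measurable (Pw I)" by simp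
  have cloc: "\<And>w y. (\<lambda>w. c) (w(i := y)) = (\<lambda>w. c) w" for i by simp
  note ind2 = indep[OF finI iI cm cloc c]
  have ffc: "(\<integral>w. ff c \<partial>Pw I) = ff c" by (simp add: P.prob_space)
  define \<Phi> where "\<Phi> w = (\<Sum>j\<in>{1..J}. \<Sum>m\<in>{1..Ms}. (1 / real Ms) *
      (cost K cM r p (w (j, m)) (X j w) - cost K cM r p (w (j, m)) c))" for w
  have intT: "integrable (Pw I) (\<lambda>w. (1 / real Ms) * (cost K cM r p (w (j, m)) (X j w) - cost K cM r p (w (j, m)) c))"
    if "j \<in> {1..J}" "m \<in> {1..Ms}" for j m
  proof -
    have "integrable (Pw I) (\<lambda>w. cost K cM r p (w (j, m)) (X j w) - cost K cM r p (w (j, m)) c)"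
      by (rule Bochner_Integration.integrable_diff[OF ind1(1)[OF that that(1)] ind2(1)[OF that]])
    then show ?thesis by (rule integrable_mult_right)
  qed
  have intPhi: "integrable (Pw I) \<Phi>" unfolding \<Phi>_def
    by (intro Bochner_Integration.integrable_sum) (use intT in auto)
  have valT: "(\<integral>w. (1 / real Ms) * (cost K cM r p (w (j, m)) (X j w) - cost K cM r p (w (j, m)) c) \<partial>Pw I)
      = (1 / real Ms) * ((\<integral>w. ff (X j w) \<partial>Pw I) - ff c)"
    if "j \<in> {1..J}" "m \<in> {1..Ms}" for j m
    using ind1[OF that that(1)] ind2[OF that] ffc by simp
  have valPhi: "(\<integral>w. \<Phi> w \<partial>Pw I) = (\<Sum>j\<in>{1..J}. (\<integral>w. ff (X j w) \<partial>Pw I) - ff c)"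
  proof -
    have "(\<integral>w. \<Phi> w \<partial>Pw I) = (\<Sum>j\<in>{1..J}. \<integral>w. (\<Sum>m\<in>{1..Ms}. (1 / real Ms) *
      (cost K cM r p (w (j, m)) (X j w) - cost K cM r p (w (j, m)) c)) \<partial>Pw I)"
      unfolding \<Phi>_def by (rule Bochner_Integration.integral_sum) (use intT in \<open>auto intro!: Bochner_Integration.integrable_sum\<close>)
    also have "\<dots> = (\<Sum>j\<in>{1..J}. \<Sum>m\<in>{1..Ms}. (1 / real Ms) * ((\<integral>w. ff (X j w) \<partial>Pw I) - ff c))"
    proof (rule sum.cong[OF refl])
      fix j assume j: "j \<in> {1..J}"
      have "(\<integral>w. (\<Sum>m\<in>{1..Ms}. (1 / real Ms) *
        (cost K cM r p (w (j, m)) (X j w) - cost K cM r p (w (j, m)) c)) \<partial>Pw I) =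
        (\<Sum>m\<in>{1..Ms}. \<integral>w. (1 / real Ms) *
        (cost K cM r p (w (j, m)) (X j w) - cost K cM r p (w (j, m)) c) \<partial>Pw I)"
        by (rule Bochner_Integration.integral_sum) (use intT j in auto)
      also have "\<dots> = (\<Sum>m\<in>{1..Ms}. (1 / real Ms) * ((\<integral>w. ff (X j w) \<partial>Pw I) - ff c))"
        by (rule sum.cong[OF refl]) (use valT j in auto)
      finally show "(\<integral>w. (\<Sum>m\<in>{1..Ms}. (1 / real Ms) *
        (cost K cM r p (w (j, m)) (X j w) - cost K cM r p (w (j, m)) c)) \<partial>Pw I) =
        (\<Sum>m\<in>{1..Ms}. (1 / real Ms) * ((\<integral>w. ff (X j w) \<partial>Pw I) - ff c))" .
    qed
    also have "\<dots> = (\<Sum>j\<in>{1..J}. (\<integral>w. ff (X j w) \<partial>Pw I) - ff c)"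
      using Ms by simp
    finally show ?thesis .
  qed
  have AEPhi: "AE w in Pw I. \<Phi> w \<le> C0 * sqrt (real J)"
    using AE_box[OF finI]
  proof eventually_elim
    case (elim w)
    have box: "box01 (w (j, m))" if "j \<in> {1..J}" "m \<in> {1..Ms}" for j m
      using elim iI[OF that] by auto
    have "\<Phi> w \<le> (\<Sum>j=1..J. stoch_grad K cM r p Ms w j (X j w) \<bullet> (X j w - c))"
      unfolding \<Phi>_def
    proof (rule sum_mono)
      fix j assume j: "j \<in> {1..J}"
      have "(\<Sum>m\<in>{1..Ms}. (1 / real Ms) * (cost K cM r p (w (j, m)) (X j w) - cost K cM r p (w (j, m)) c))
        \<le> (\<Sum>m\<in>{1..Ms}. (1 / real Ms) * ((r (crit_type K cM (w (j, m)) (X j w)) *\<^sub>R w (j, m) - p) \<bullet> (X j w - c)))"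
      proof (rule sum_mono)
        fix m assume m: "m \<in> {1..Ms}"
        have "cost K cM r p (w (j, m)) (X j w) + (r (crit_type K cM (w (j, m)) (X j w)) *\<^sub>R w (j, m) - p) \<bullet> (c - X j w)
          \<le> cost K cM r p (w (j, m)) c"
          by (rule subgrad'[OF box[OF j m] c XF])
        moreover have "(r (crit_type K cM (w (j, m)) (X j w)) *\<^sub>R w (j, m) - p) \<bullet> (c - X j w) =
          - ((r (crit_type K cM (w (j, m)) (X j w)) *\<^sub>R w (j, m) - p) \<bullet> (X j w - c))"
          by (simp add: inner_diff_right)
        ultimately show "(1 / real Ms) * (cost K cM r p (w (j, m)) (X j w) - cost K cM r p (w (j, m)) c)
          \<le> (1 / real Ms) * ((r (crit_type K cM (w (j, m)) (X j w)) *\<^sub>R w (j, m) - p) \<bullet> (X j w - c))"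
          by (intro mult_left_mono) auto
      qed
      also have "\<dots> = stoch_grad K cM r p Ms w j (X j w) \<bullet> (X j w - c)"
        unfolding stoch_grad_def inner_scaleR_left inner_sum_left by (simp add: sum_distrib_left)
      finally show "(\<Sum>m\<in>{1..Ms}. (1 / real Ms) * (cost K cM r p (w (j, m)) (X j w) - cost K cM r p (w (j, m)) c))
        \<le> stoch_grad K cM r p Ms w j (X j w) \<bullet> (X j w - c)" .
    qed
    also have "\<dots> \<le> C0 * sqrt (real J)"
      unfolding X_def by (rule det_bound[where w=w and J=J, OF c1 c box])
    finally show ?case .
  qed
  have intPhi_le: "(\<integral>w. \<Phi> w \<partial>Pw I) \<le> C0 * sqrt (real J)"
  proof -
    have "(\<integral>w. \<Phi> w \<partial>Pw I) \<le> (\<integral>w. C0 * sqrt (real J) \<partial>Pw I)"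
      by (rule integral_mono_AE[OF intPhi _ AEPhi]) simp
    then show ?thesis by (simp add: P.prob_space)
  qed
  define out where "out w = sgd_output K cM r p Ms c1 w J" for w
  have out_sum: "out w = (\<Sum>j\<in>{1..J}. (1 / real J) *\<^sub>R X j w)" for w
    unfolding out_def sgd_output_def X_def by (simp add: scaleR_sum_right)
  have sumJ: "(\<Sum>j\<in>{1..J}. 1 / real J) = 1" using J by simp
  have outF: "out w \<in> FF" for w
    unfolding out_sum by (rule convex_sum[OF _ F_convex]) (use sumJ XF in auto)
  have jensen: "ff (out w) \<le> (\<Sum>j\<in>{1..J}. (1 / real J) * ff (X j w))" for w
    unfolding out_sum by (rule convex_on_sum[OF _ _ f_convex]) (use sumJ XF J in auto)
  have outm: "out \<in> borel_measurable (Pw I)"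
  proof -
    have "(\<lambda>w. \<Sum>j\<in>{1..J}. (1 / real J) *\<^sub>R X j w) \<in> borel_measurable (Pw I)"
      by (rule borel_measurable_sum) (rule borel_measurable_scaleR[OF borel_measurable_const Xm])
    then show ?thesis unfolding out_sum[abs_def] .
  qed
  have ffout_m: "(\<lambda>w. ff (out w)) \<in> borel_measurable (Pw I)"
    using measurable_compose[OF outm ff_meas] by simp
  have int_out: "integrable (Pw I) (\<lambda>w. ff (out w))"
    by (rule P.integrable_const_bound[where B=BB]) (use f_bound outF ffout_m in auto)
  then show "integrable (Pw ({1..J} \<times> {1..Ms})) (\<lambda>w. ff (sgd_output K cM r p Ms c1 w J))"
    unfolding I_def out_def .
  have intX: "integrable (Pw I) (\<lambda>w. ff (X j w))" if "j \<in> {1..J}" for j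
    using ind1(2)[OF that _ that, of 1] Ms by auto
  have "(\<integral>w. ff (out w) \<partial>Pw I) \<le> (\<integral>w. (\<Sum>j\<in>{1..J}. (1 / real J) * ff (X j w)) \<partial>Pw I)"
    by (rule integral_mono[OF int_out]) (use intX jensen in \<open>auto intro!: Bochner_Integration.integrable_sum\<close>)
  also have "\<dots> = (\<Sum>j\<in>{1..J}. (1 / real J) * (\<integral>w. ff (X j w) \<partial>Pw I))"
    by (subst Bochner_Integration.integral_sum) (use intX in auto)
  also have "\<dots> = (1 / real J) * ((\<integral>w. \<Phi> w \<partial>Pw I) + real J * ff c)"
    unfolding valPhi by (simp add: sum_distrib_left sum_subtractf algebra_simps)
  also have "\<dots> \<le> (1 / real J) * (C0 * sqrt (real J) + real J * ff c)"
    using intPhi_le J by (intro mult_left_mono) auto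
  also have "\<dots> = ff c + C0 / sqrt (real J)"
  proof -
    have Jp: "real J > 0" using J by simp
    have sJ: "real J = sqrt (real J) * sqrt (real J)" by simp
    have sp: "sqrt (real J) > 0" using J by simp
    have "(1 / real J) * (C0 * sqrt (real J) + real J * ff c) = C0 * sqrt (real J) / real J + ff c"
      using Jp by (simp add: divide_simps)
    also have "C0 * sqrt (real J) / real J = C0 / sqrt (real J)"
      using sp by (subst sJ) (simp add: divide_simps)
    finally show ?thesis by simp
  qed
  finally show "(\<integral>w. ff (sgd_output K cM r p Ms c1 w J) \<partial>Pw ({1..J} \<times> {1..Ms})) \<le> ff c + C0 / sqrt (real J)"
    unfolding I_def out_def .
  have bdd: "bdd_below (ff ` FF)"
    by (rule bdd_belowI2[where m="- BB"]) (use f_bound in force)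
  have "(INF c\<in>FF. ff c) = (\<integral>w. (INF c\<in>FF. ff c) \<partial>Pw I)" by (simp add: P.prob_space)
  also have "\<dots> \<le> (\<integral>w. ff (out w) \<partial>Pw I)"
    by (rule integral_mono[OF _ int_out]) (use cINF_lower[OF bdd outF] in auto)
  finally show "(\<integral>w. ff (sgd_output K cM r p Ms c1 w J) \<partial>Pw ({1..J} \<times> {1..Ms})) \<ge> (INF c\<in>FF. ff c)"
    unfolding I_def out_def .
qed


lemma final_conv:
  assumes c1: "c1 \<in> FF"
  shows "(\<lambda>J. \<integral>w. ff (sgd_output K cM r p Ms c1 w J) \<partial>Pw ({1..J} \<times> {1..Ms}))
        \<longlonglongrightarrow> (INF c\<in>FF. ff c)"
proof (rule LIMSEQ_I)
  fix \<epsilon> :: real assume e: "0 < \<epsilon>"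
  define m where "m = (INF c\<in>FF. ff c)"
  have bdd: "bdd_below (ff ` FF)"
    by (rule bdd_belowI2[where m="- BB"]) (use f_bound in force)
  have "m < m + \<epsilon> / 2" using e by simp
  then obtain c where c: "c \<in> FF" "ff c < m + \<epsilon> / 2"
    unfolding m_def using cINF_less_iff[OF F_ne bdd] by blast
  have lim: "(\<lambda>n. C0 / sqrt (real n)) \<longlonglongrightarrow> 0"
    by (rule tendsto_divide_0[OF tendsto_const filterlim_at_top_imp_at_infinity[OF
          filterlim_compose[OF sqrt_at_top filterlim_real_sequentially]]])
  then have "eventually (\<lambda>n. C0 / sqrt (real n) < \<epsilon> / 2) sequentially"
    using e by (intro order_tendstoD(2)) auto
  then obtain N1 where N1: "\<And>n. n \<ge> N1 \<Longrightarrow> C0 / sqrt (real n) < \<epsilon> / 2"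
    unfolding eventually_sequentially by blast
  show "\<exists>no. \<forall>n\<ge>no. norm ((\<integral>w. ff (sgd_output K cM r p Ms c1 w n) \<partial>Pw ({1..n} \<times> {1..Ms})) - (INF c\<in>FF. ff c)) < \<epsilon>"
  proof (intro exI allI impI)
    fix n assume n: "max N1 1 \<le> n"
    have n1: "n \<ge> 1" using n by simp
    note mi = main_ineq[OF n1 c1 c(1)]
    have nN: "N1 \<le> n" using n by simp
    have A: "(\<integral>w. ff (sgd_output K cM r p Ms c1 w n) \<partial>Pw ({1..n} \<times> {1..Ms})) < m + \<epsilon>"
      using mi(2) N1[OF nN] c(2) by linarith
    have B: "m \<le> (\<integral>w. ff (sgd_output K cM r p Ms c1 w n) \<partial>Pw ({1..n} \<times> {1..Ms}))"
      using mi(3) unfolding m_def .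
    have "norm ((\<integral>w. ff (sgd_output K cM r p Ms c1 w n) \<partial>Pw ({1..n} \<times> {1..Ms})) - m) < \<epsilon>"
      unfolding real_norm_def abs_less_iff using A B e by linarith
    then show "norm ((\<integral>w. ff (sgd_output K cM r p Ms c1 w n) \<partial>Pw ({1..n} \<times> {1..Ms})) - (INF c\<in>FF. ff c)) < \<epsilon>"
      unfolding m_def .
  qed
qed

end

theorem theorem2:
  fixes K Ms :: nat and cM r :: "nat \<Rightarrow> real" and p c1 :: "real^'n"
    and Deps :: "(real^'n) measure"
  assumes K: "K \<ge> 1"
    and cM_pos: "\<forall>k\<in>{1..K}. cM k > 0"
    and r_nonneg: "r 1 \<ge> 0"
    and r_incr: "\<forall>k\<in>{1..<K}. r k < r (Suc k)"
    and p_nonneg: "\<forall>i. p $ i \<ge> 0"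
    and prob: "prob_space Deps"
    and borel: "sets Deps = sets borel"
    and supp: "AE e in Deps. \<forall>i. e $ i \<in> {0..1}"
    and Ms: "Ms \<ge> 1"
    and c1: "c1 \<in> feasible_set (\<Sum>k=1..K. cM k)"
  shows "convex_on (feasible_set (\<Sum>k=1..K. cM k)) (exp_cost K cM r p Deps)
    \<and> ((\<lambda>J. \<integral>w. exp_cost K cM r p Deps (sgd_output K cM r p Ms c1 w J)
                   \<partial>(PiM ({1..J} \<times> {1..Ms}) (\<lambda>_. Deps)))
        \<longlonglongrightarrow> (INF c\<in>feasible_set (\<Sum>k=1..K. cM k). exp_cost K cM r p Deps c))"
proof -
  interpret sgdctx K cM r p Deps Ms
    by (rule sgdctx.intro[OF K cM_pos r_nonneg r_incr p_nonneg prob borel supp Ms])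
  show ?thesis by (rule conjI[OF f_convex final_conv[OF c1]])
qed

end
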